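(* In any iteration of Algorithm 1, if there exist an integer $m\ge0$ and an index $j\in\{1,\dots,n\}$ such that $i^*=b^m(j)$, then $i_L<j$ (where $i^*,i_L$ are the quantities of that iteration).
   Context: Problem (P): given an integer $n\ge1$, reals $0<q_1\le\cdots\le q_n$, $z_1,\dots,z_n>0$ and $K>0$, maximize $\sum_{i=1}^n x_i$ subject to $0\le x_i\le q_i$, $0\le x_1\le\cdots\le x_n$, $\sum_{i=1}^n z_ix_i\le K$. For $1\le i<j\le n+1$ let $\mathrm{sum}(i,j)=z_i+\cdots+z_{j-1}$ and $\mathrm{avg}(i,j)=\mathrm{sum}(i,j)/(j-i)$. Algorithm 1 (run on an instance of (P)): Initialize $S=\{0,n+1\}$, $y_i=\mathrm{avg}(i,n+1)$ and $x_i=0$ for $i=1,\dots,n$, and $\hat B=K$. While $\hat B>0$ and $S\ne\{0,1,\dots,n+1\}$, perform an iteration: let $i^*$ be the index $i\in\{1,\dots,n\}\setminus S$ minimizing $y_i$, ties broken in favour of the smallest index; let $i_L=\max\{j\in S:j<i^*\}$ and $i_R=\min\{j\in S:j>i^*\}$; set $d=\min\{\hat B/((i_R-i^* )y_{i^*}),\ q_{i^*}-x_{i^*}\}$; set $\hat B\leftarrow\hat B-d(i_R-i^* )y_{i^*}$; set $x_i\leftarrow x_i+d$ for all $i^*\le i<i_R$; set $y_i\leftarrow\mathrm{avg}(i,i^* )$ for all $i_L<i<i^*$; add $i^*$ to $S$. Finally output $x_1,\dots,x_n$. Blocker: for $1\le i\le n$, $b(i)$ is the value of $i^*$ in the last iteration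 in which $y_i$ is updated (i.e. the last iteration with $i_L<i<i^*$); if $y_i$ is never updated, $b(i)=n+1$. Iterates: $b^0$ is the identity and $b^m(i)=b(b^{m-1}(i))$ (defined as long as $b^{m-1}(i)\le n$). *)

theory Defs
  imports Main "HOL.Real"
begin

text \<open>Instance data: n, q_1..q_n, z_1..z_n, K. Vectors are functions nat => real,
  only indices 1..n are relevant.\<close>

definition sumz :: "(nat \<Rightarrow> real) \<Rightarrow> nat \<Rightarrow> nat \<Rightarrow> real" where
  "sumz z i j = (\<Sum>k\<in>{i..<j}. z k)"

definition avg :: "(nat \<Rightarrow> real) \<Rightarrow> nat \<Rightarrow> nat \<Rightarrow> real" where
  "avg z i j = sumz z i j / real (j - i)"

record alg_state =
  S_of :: "nat set"
  y_of :: "nat \<Rightarrow> real"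
  x_of :: "nat \<Rightarrow> real"
  B_of :: real

definition init_state :: "nat \<Rightarrow> (nat \<Rightarrow> real) \<Rightarrow> real \<Rightarrow> alg_state" where
  "init_state n z K = \<lparr> S_of = {0, n+1}, y_of = (\<lambda>i. avg z i (n+1)),
                         x_of = (\<lambda>i. 0), B_of = K \<rparr>"

definition running :: "nat \<Rightarrow> alg_state \<Rightarrow> bool" where
  "running n st = (B_of st > 0 \<and> S_of st \<noteq> {0..n+1})"

definition istar :: "nat \<Rightarrow> alg_state \<Rightarrow> nat" where
  "istar n st = (LEAST i. i \<in> {1..n} - S_of st \<and>
                   (\<forall>j\<in>{1..n} - S_of st. y_of st i \<le> y_of st j))"

definition iL :: "nat \<Rightarrow> alg_state \<Rightarrow> nat" where
  "iL n st = Max {j \<in> S_of st. j < istar n st}"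

definition iR :: "nat \<Rightarrow> alg_state \<Rightarrow> nat" where
  "iR n st = Min {j \<in> S_of st. istar n st < j}"

definition step :: "nat \<Rightarrow> (nat \<Rightarrow> real) \<Rightarrow> (nat \<Rightarrow> real) \<Rightarrow> alg_state \<Rightarrow> alg_state" where
  "step n q z st =
    (let i = istar n st; l = iL n st; r = iR n st;
         d = min (B_of st / (real (r - i) * y_of st i)) (q i - x_of st i)
     in \<lparr> S_of = insert i (S_of st),
          y_of = (\<lambda>t. if l < t \<and> t < i then avg z t i else y_of st t),
          x_of = (\<lambda>t. if i \<le> t \<and> t < r then x_of st t + d else x_of st t),
          B_of = B_of st - d * real (r - i) * y_of st i \<rparr>)"

text \<open>State before iteration k (0-based). Iteration k is performed iff
  running n (alg n q z K k); once the loop stops the state stays fixed.\<close>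
primrec alg :: "nat \<Rightarrow> (nat \<Rightarrow> real) \<Rightarrow> (nat \<Rightarrow> real) \<Rightarrow> real \<Rightarrow> nat \<Rightarrow> alg_state" where
  "alg n q z K 0 = init_state n z K"
| "alg n q z K (Suc k) =
     (if running n (alg n q z K k) then step n q z (alg n q z K k) else alg n q z K k)"

definition updates :: "nat \<Rightarrow> (nat \<Rightarrow> real) \<Rightarrow> (nat \<Rightarrow> real) \<Rightarrow> real \<Rightarrow> nat \<Rightarrow> nat \<Rightarrow> bool" where
  "updates n q z K i k = (running n (alg n q z K k) \<and>
      iL n (alg n q z K k) < i \<and> i < istar n (alg n q z K k))"

definition blocker :: "nat \<Rightarrow> (nat \<Rightarrow> real) \<Rightarrow> (nat \<Rightarrow> real) \<Rightarrow> real \<Rightarrow> nat \<Rightarrow> nat" where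
  "blocker n q z K i =
     (if \<exists>k. updates n q z K i k
      then istar n (alg n q z K (GREATEST k. updates n q z K i k))
      else n + 1)"

end

theory Submission
  imports Defs
begin

lemma istar_in:
  assumes "running n st" "S_of st \<subseteq> {0..n+1}" "0 \<in> S_of st" "n+1 \<in> S_of st"
  shows "istar n st \<in> {1..n} \<and> istar n st \<notin> S_of st"
proof -
  let ?A = "{1..n} - S_of st"
  have ne: "?A \<noteq> {}"
  proof
    assume "?A = {}"
    hence "{1..n} \<subseteq> S_of st" by blast
    have "x \<in> S_of st" if "x \<in> {0..n+1}" for x
    proof (cases "x = 0 \<or> x = n+1")
      case True thus ?thesis using assms(3,4) by blast
    next
      case False thus ?thesis using that \<open>{1..n} \<subseteq> S_of st\<close> by auto
    qed
    hence "S_of st = {0..n+1}" using assms(2) by blast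
    thus False using assms(1) by (simp add: running_def)
  qed
  have fin: "finite ?A" by simp
  have "Min (y_of st ` ?A) \<in> y_of st ` ?A" using ne fin by (intro Min_in) auto
  then obtain i where i: "i \<in> ?A" "y_of st i = Min (y_of st ` ?A)" by auto
  have "\<forall>j\<in>?A. y_of st i \<le> y_of st j" using i fin by simp
  hence "\<exists>i. i \<in> ?A \<and> (\<forall>j\<in>?A. y_of st i \<le> y_of st j)" using i by blast
  from LeastI_ex[OF this] show ?thesis unfolding istar_def by blast
qed

lemma S_step: "S_of (step n q z st) = insert (istar n st) (S_of st)"
  by (simp add: step_def Let_def)

lemma inv: "S_of (alg n q z K k) \<subseteq> {0..n+1} \<and> 0 \<in> S_of (alg n q z K k) \<and> n+1 \<in> S_of (alg n q z K k)"
proof (induction k)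
  case 0
  then show ?case by (auto simp: init_state_def)
next
  case (Suc k)
  show ?case
  proof (cases "running n (alg n q z K k)")
    case True
    with Suc istar_in[OF True] show ?thesis by (auto simp: S_step)
  next
    case False
    with Suc show ?thesis by simp
  qed
qed

lemma istar_alg:
  assumes "running n (alg n q z K k)"
  shows "istar n (alg n q z K k) \<in> {1..n} \<and> istar n (alg n q z K k) \<notin> S_of (alg n q z K k)"
  using istar_in[OF assms] inv[of n q z K k] by blast

lemma iL_props:
  assumes "0 \<in> S_of st" "istar n st \<ge> 1"
  shows "iL n st \<in> S_of st \<and> iL n st < istar n st \<and> (\<forall>s\<in>S_of st. s < istar n st \<longrightarrow> s \<le> iL n st)"
proof -
  let ?B = "{j \<in> S_of st. j < istar n st}"
  have fin: "finite ?B" by (rule finite_subset[of _ "{..<istar n st}"]) auto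
  have ne: "0 \<in> ?B" using assms by auto
  have "Max ?B \<in> ?B" using fin ne by (intro Max_in) auto
  moreover have "\<forall>s\<in>?B. s \<le> Max ?B" using fin by simp
  ultimately show ?thesis unfolding iL_def by auto
qed

lemma iL_alg:
  assumes "running n (alg n q z K k)"
  shows "iL n (alg n q z K k) \<in> S_of (alg n q z K k) \<and> iL n (alg n q z K k) < istar n (alg n q z K k)
     \<and> (\<forall>s\<in>S_of (alg n q z K k). s < istar n (alg n q z K k) \<longrightarrow> s \<le> iL n (alg n q z K k))"
  using iL_props[of "alg n q z K k" n] inv[of n q z K k] istar_alg[OF assms] by auto

lemma S_mono1: "S_of (alg n q z K k) \<subseteq> S_of (alg n q z K (Suc k))"
  by (auto simp: S_step)

lemma S_mono: "k \<le> t \<Longrightarrow> S_of (alg n q z K k) \<subseteq> S_of (alg n q z K t)"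
  using lift_Suc_mono_le[of "\<lambda>k. S_of (alg n q z K k)", OF S_mono1] by blast

lemma istar_in_next:
  assumes "running n (alg n q z K k)"
  shows "istar n (alg n q z K k) \<in> S_of (alg n q z K (Suc k))"
  using assms by (simp add: S_step)

lemma card_run: "running n (alg n q z K k) \<Longrightarrow> k + 2 \<le> card (S_of (alg n q z K k))"
proof (induction k)
  case 0
  then show ?case by (simp add: init_state_def)
next
  case (Suc k)
  show ?case
  proof (cases "running n (alg n q z K k)")
    case True
    have fin: "finite (S_of (alg n q z K k))" using inv[of n q z K k] finite_subset by blast
    have "card (S_of (alg n q z K (Suc k))) = Suc (card (S_of (alg n q z K k)))"
      using True istar_alg[OF True] fin by (simp add: S_step)
    with Suc.IH True show ?thesis by simp
  next
    case False
    with Suc.prems show ?thesis by simp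
  qed
qed

lemma run_bound: "running n (alg n q z K k) \<Longrightarrow> k \<le> n"
proof -
  assume r: "running n (alg n q z K k)"
  have "card (S_of (alg n q z K k)) \<le> card {0..n+1}"
    using inv[of n q z K k] by (intro card_mono) auto
  with card_run[OF r] show ?thesis by simp
qed

lemma blocker_ex:
  assumes "blocker n q z K j \<noteq> n + 1"
  shows "\<exists>t. updates n q z K j t \<and> blocker n q z K j = istar n (alg n q z K t)"
proof -
  have ex: "\<exists>k. updates n q z K j k" using assms unfolding blocker_def by presburger
  then obtain k0 where k0: "updates n q z K j k0" by blast
  have bd: "\<forall>y. updates n q z K j y \<longrightarrow> y \<le> n" using run_bound by (auto simp: updates_def)
  have "updates n q z K j (GREATEST k. updates n q z K j k)" by (rule GreatestI_nat[of "updates n q z K j", OF k0]) (use bd in blast)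
  moreover have "blocker n q z K j = istar n (alg n q z K (GREATEST k. updates n q z K j k))"
    using ex unfolding blocker_def by simp
  ultimately show ?thesis by blast
qed

lemma blocker_gt: "i \<le> n \<Longrightarrow> i < blocker n q z K i"
proof (cases "blocker n q z K i = n + 1")
  case True thus "i \<le> n \<Longrightarrow> ?thesis" by simp
next
  case False
  from blocker_ex[OF False] show ?thesis by (auto simp: updates_def)
qed

lemma blocker_chain: "\<forall>m' < m. (blocker n q z K ^^ m') x \<le> n \<Longrightarrow> x \<le> (blocker n q z K ^^ m) x"
proof (induction m)
  case 0 thus ?case by simp
next
  case (Suc m)
  have "(blocker n q z K ^^ m) x \<le> n" using Suc.prems by simp
  hence "(blocker n q z K ^^ m) x < (blocker n q z K ^^ Suc m) x" using blocker_gt by simp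
  with Suc show ?case by simp
qed

lemma main:
  "running n (alg n q z K k) \<Longrightarrow> j \<in> {1..n} \<Longrightarrow> \<forall>m' < m. (blocker n q z K ^^ m') j \<le> n
   \<Longrightarrow> istar n (alg n q z K k) = (blocker n q z K ^^ m) j \<Longrightarrow> iL n (alg n q z K k) < j"
proof (induction m arbitrary: j)
  case 0
  then show ?case using iL_alg[OF 0(1)] by simp
next
  case (Suc m)
  let ?b = "blocker n q z K"
  let ?st = "alg n q z K k"
  have ist: "istar n ?st = (?b ^^ m) (?b j)" using Suc.prems(4) by (simp add: funpow_swap1)
  have bjn: "?b j \<le> n"
  proof (cases m)
    case 0 thus ?thesis using ist istar_alg[OF Suc.prems(1)] by simp
  next
    case (Suc m'') thus ?thesis using Suc.prems(3)[rule_format, of 1] by simp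
  qed
  hence "?b j \<noteq> n + 1" by simp
  from blocker_ex[OF this] obtain t where t: "updates n q z K j t" "?b j = istar n (alg n q z K t)" by blast
  have rt: "running n (alg n q z K t)" using t(1) by (simp add: updates_def)
  have jlt: "j < ?b j" using t by (simp add: updates_def)
  have bj1: "?b j \<in> {1..n}" using bjn jlt by simp
  have h3: "\<forall>m' < m. (?b ^^ m') (?b j) \<le> n"
  proof (intro allI impI)
    fix m' assume "m' < m"
    hence "Suc m' < Suc m" by simp
    with Suc.prems(3) have "(?b ^^ Suc m') j \<le> n" by blast
    thus "(?b ^^ m') (?b j) \<le> n" by (simp add: funpow_swap1)
  qed
  have IH: "iL n ?st < ?b j" using Suc.IH[OF Suc.prems(1) bj1 h3 ist] .
  have L: "iL n ?st \<in> S_of ?st \<and> iL n ?st < istar n ?st \<and> (\<forall>s\<in>S_of ?st. s < istar n ?st \<longrightarrow> s \<le> iL n ?st)"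
    using iL_alg[OF Suc.prems(1)] .
  have bjle: "?b j \<le> istar n ?st" using ist blocker_chain[OF h3] by simp
  have kt: "k \<le> t"
  proof (rule ccontr)
    assume "\<not> k \<le> t"
    hence st: "Suc t \<le> k" by simp
    have bS: "?b j \<in> S_of ?st" using S_mono[OF st, where n=n and q=q and z=z and K=K] istar_in_next[OF rt] t(2) by (metis subsetD)
    show False
    proof (cases "?b j = istar n ?st")
      case True thus False using bS istar_alg[OF Suc.prems(1)] by simp
    next
      case False
      hence "?b j < istar n ?st" using bjle by simp
      hence "?b j \<le> iL n ?st" using L bS by blast
      thus False using IH by simp
    qed
  qed
  have "iL n ?st \<in> S_of (alg n q z K t)" using L S_mono[OF kt] by blast
  moreover have "iL n ?st < istar n (alg n q z K t)" using IH t(2) by simp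
  ultimately have "iL n ?st \<le> iL n (alg n q z K t)" using iL_alg[OF rt] by blast
  moreover have "iL n (alg n q z K t) < j" using t(1) by (simp add: updates_def)
  ultimately show ?case by simp
qed

theorem lemma10:
  fixes n :: nat and q z :: "nat \<Rightarrow> real" and K :: real and k m j :: nat
  assumes "n \<ge> 1"
    and "\<forall>i\<in>{1..n}. 0 < q i"
    and "\<forall>i j. 1 \<le> i \<and> i \<le> j \<and> j \<le> n \<longrightarrow> q i \<le> q j"
    and "\<forall>i\<in>{1..n}. 0 < z i"
    and "K > 0"
    and "running n (alg n q z K k)"
    and "j \<in> {1..n}"
    and "\<forall>m' < m. (blocker n q z K ^^ m') j \<le> n"
    and "istar n (alg n q z K k) = (blocker n q z K ^^ m) j"
  shows "iL n (alg n q z K k) < j"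
  using main assms(6-9) by blast

end
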